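(* Let $k$ be an integer. If a graph $T$ is a maximum $\mathsf{TJ}_k$-graph, then for every integer $n \geq k$, $T$ is a maximum $\mathsf{TJ}_n$-graph.
   Context: Graphs are finite, simple, undirected. $\mathsf{TJ}_k(G)$ is the graph on the cliques of $G$ of size $k$ where $C, C'$ are adjacent iff $|C \setminus C'| = |C' \setminus C| = 1$. A graph $T$ is a $\mathsf{TJ}_k$-graph if $T \cong \mathsf{TJ}_k(G)$ for some graph $G$, and a maximum $\mathsf{TJ}_k$-graph if $T \cong \mathsf{TJ}_k(G)$ for some graph $G$ with $\omega(G) = k$, where $\omega(G)$ is the maximum clique size of $G$. *)

theory Defs
  imports Main
begin

definition graph :: "'a set \<Rightarrow> ('a \<Rightarrow> 'a \<Rightarrow> bool) \<Rightarrow> bool" where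
  "graph V E \<longleftrightarrow> finite V \<and> (\<forall>x y. E x y \<longrightarrow> x \<in> V \<and> y \<in> V)
     \<and> (\<forall>x y. E x y \<longrightarrow> E y x) \<and> (\<forall>x. \<not> E x x)"

definition clique :: "'a set \<Rightarrow> ('a \<Rightarrow> 'a \<Rightarrow> bool) \<Rightarrow> 'a set \<Rightarrow> bool" where
  "clique V E C \<longleftrightarrow> C \<subseteq> V \<and> (\<forall>x\<in>C. \<forall>y\<in>C. x \<noteq> y \<longrightarrow> E x y)"

definition cliques_of_size :: "'a set \<Rightarrow> ('a \<Rightarrow> 'a \<Rightarrow> bool) \<Rightarrow> nat \<Rightarrow> 'a set set" where
  "cliques_of_size V E k = {C. clique V E C \<and> finite C \<and> card C = k}"

definition clique_number :: "'a set \<Rightarrow> ('a \<Rightarrow> 'a \<Rightarrow> bool) \<Rightarrow> nat" where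
  "clique_number V E = Max (card ` {C. clique V E C})"

definition TJ_V :: "'a set \<Rightarrow> ('a \<Rightarrow> 'a \<Rightarrow> bool) \<Rightarrow> nat \<Rightarrow> 'a set set" where
  "TJ_V V E k = cliques_of_size V E k"

definition TJ_E :: "'a set \<Rightarrow> ('a \<Rightarrow> 'a \<Rightarrow> bool) \<Rightarrow> nat \<Rightarrow> 'a set \<Rightarrow> 'a set \<Rightarrow> bool" where
  "TJ_E V E k C C' \<longleftrightarrow> C \<in> cliques_of_size V E k \<and> C' \<in> cliques_of_size V E k
     \<and> card (C - C') = 1 \<and> card (C' - C) = 1"

definition graph_iso :: "'a set \<Rightarrow> ('a \<Rightarrow> 'a \<Rightarrow> bool) \<Rightarrow> 'b set \<Rightarrow> ('b \<Rightarrow> 'b \<Rightarrow> bool) \<Rightarrow> bool" where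
  "graph_iso V E V' E' \<longleftrightarrow> (\<exists>f. bij_betw f V V' \<and> (\<forall>x\<in>V. \<forall>y\<in>V. E x y \<longleftrightarrow> E' (f x) (f y)))"

text \<open>Every finite graph is isomorphic to one on natural-number vertices,
so quantifying over graphs on nat loses no generality.\<close>
definition max_TJ_graph :: "nat \<Rightarrow> 'a set \<Rightarrow> ('a \<Rightarrow> 'a \<Rightarrow> bool) \<Rightarrow> bool" where
  "max_TJ_graph k V E \<longleftrightarrow> (\<exists>(W :: nat set) F. graph W F \<and> clique_number W F = k
      \<and> graph_iso V E (TJ_V W F k) (TJ_E W F k))"

end

theory Submission
  imports Defs
begin

lemma cn_facts:
  assumes g: "graph W F"
  shows "\<exists>C. clique W F C \<and> card C = clique_number W F"
    and "\<And>C. clique W F C \<Longrightarrow> card C \<le> clique_number W F"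
proof -
  have fin: "finite W" using g by (simp add: graph_def)
  have "{C. clique W F C} \<subseteq> Pow W" by (auto simp: clique_def)
  hence f: "finite (card ` {C. clique W F C})" using fin by (meson finite_Pow_iff finite_imageI finite_subset)
  have ne: "card ` {C. clique W F C} \<noteq> {}" by (auto simp: clique_def)
  show "\<exists>C. clique W F C \<and> card C = clique_number W F"
    using Max_in[OF f ne] unfolding clique_number_def by auto
  show "\<And>C. clique W F C \<Longrightarrow> card C \<le> clique_number W F"
    using Max_ge[OF f] unfolding clique_number_def by auto
qed

lemma iso_trans:
  assumes "graph_iso V1 E1 V2 E2" "graph_iso V2 E2 V3 E3"
  shows "graph_iso V1 E1 V3 E3"
proof -
  obtain f where f: "bij_betw f V1 V2" "\<forall>x\<in>V1. \<forall>y\<in>V1. E1 x y \<longleftrightarrow> E2 (f x) (f y)"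
    using assms(1) by (auto simp: graph_iso_def)
  obtain g where g: "bij_betw g V2 V3" "\<forall>x\<in>V2. \<forall>y\<in>V2. E2 x y \<longleftrightarrow> E3 (g x) (g y)"
    using assms(2) by (auto simp: graph_iso_def)
  have "bij_betw (g \<circ> f) V1 V3" using f(1) g(1) by (rule bij_betw_trans)
  moreover have "\<forall>x\<in>V1. \<forall>y\<in>V1. E1 x y \<longleftrightarrow> E3 ((g \<circ> f) x) ((g \<circ> f) y)"
    using f g bij_betwE[OF f(1)] by auto
  ultimately show ?thesis unfolding graph_iso_def by blast
qed

lemma join_lemma:
  assumes g: "graph W F" and disj: "W \<inter> K = {}" and finK: "finite K"
    and kdef: "k = clique_number W F"
  defines "F' \<equiv> (\<lambda>x y. F x y \<or> (x \<noteq> y \<and> x \<in> W \<union> K \<and> y \<in> W \<union> K \<and> (x \<in> K \<or> y \<in> K)))"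
  shows "graph (W \<union> K) F'"
    and "clique_number (W \<union> K) F' = k + card K"
    and "graph_iso (TJ_V W F k) (TJ_E W F k) (TJ_V (W \<union> K) F' (k + card K)) (TJ_E (W \<union> K) F' (k + card K))"
proof -
  have finW: "finite W" and supp: "\<And>x y. F x y \<Longrightarrow> x \<in> W \<and> y \<in> W"
    and sym: "\<And>x y. F x y \<Longrightarrow> F y x" and irr: "\<And>x. \<not> F x x"
    using g by (auto simp: graph_def)
  show g': "graph (W \<union> K) F'"
  proof -
    have a: "finite (W \<union> K)" using finW finK by simp
    have b: "\<forall>x y. F' x y \<longrightarrow> x \<in> W \<union> K \<and> y \<in> W \<union> K"
    proof (intro allI impI)
      fix x y assume "F' x y" then show "x \<in> W \<union> K \<and> y \<in> W \<union> K" unfolding F'_def using supp[of x y] by auto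
    qed
    have c: "\<forall>x y. F' x y \<longrightarrow> F' y x"
    proof (intro allI impI)
      fix x y assume "F' x y" then show "F' y x" unfolding F'_def using sym[of x y] by auto
    qed
    have d: "\<forall>x. \<not> F' x x" unfolding F'_def using irr by auto
    show ?thesis unfolding graph_def by (rule conjI[OF a conjI[OF b conjI[OF c d]]])
  qed
  have clW: "clique W F C \<longleftrightarrow> clique (W \<union> K) F' C \<and> C \<subseteq> W" for C
    unfolding clique_def F'_def using disj supp by blast
  have clK: "clique (W \<union> K) F' (C \<union> K)" if "clique W F C" for C
    unfolding clique_def
  proof (intro conjI ballI impI)
    show "C \<union> K \<subseteq> W \<union> K" using that by (auto simp: clique_def)
    fix x y assume xy: "x \<in> C \<union> K" "y \<in> C \<union> K" "x \<noteq> y"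
    have "C \<subseteq> W" "\<forall>x\<in>C. \<forall>y\<in>C. x \<noteq> y \<longrightarrow> F x y" using that by (auto simp: clique_def)
    then show "F' x y" using xy unfolding F'_def by blast
  qed
  have split: "clique W F (D \<inter> W) \<and> D = (D \<inter> W) \<union> (D \<inter> K)" if "clique (W \<union> K) F' D" for D
  proof
    have D: "D \<subseteq> W \<union> K" "\<forall>x\<in>D. \<forall>y\<in>D. x \<noteq> y \<longrightarrow> F' x y" using that by (auto simp: clique_def)
    show "D = (D \<inter> W) \<union> (D \<inter> K)" using D(1) by blast
    show "clique W F (D \<inter> W)" unfolding clique_def
    proof (intro conjI ballI impI)
      show "D \<inter> W \<subseteq> W" by blast
      fix x y assume xy: "x \<in> D \<inter> W" "y \<in> D \<inter> W" "x \<noteq> y"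
      then have "F' x y" using D(2) by blast
      moreover have "x \<notin> K" "y \<notin> K" using xy disj by auto
      ultimately show "F x y" unfolding F'_def by blast
    qed
  qed
  have cardsplit: "card D \<le> k + card K \<and> (card D = k + card K \<longrightarrow> card (D \<inter> W) = k \<and> D \<inter> K = K)"
    if "clique (W \<union> K) F' D" for D
  proof -
    have s: "clique W F (D \<inter> W)" "D = (D \<inter> W) \<union> (D \<inter> K)" using split[OF that] by auto
    have c1: "card (D \<inter> W) \<le> k" using cn_facts(2)[OF g s(1)] kdef by simp
    have c2: "card (D \<inter> K) \<le> card K" using finK by (simp add: card_mono)
    have fD: "finite (D \<inter> W)" using finW by simp
    have cD: "card D = card (D \<inter> W) + card (D \<inter> K)"
    proof -
      have "(D \<inter> W) \<inter> (D \<inter> K) = {}" using disj by blast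
      moreover have "finite (D \<inter> K)" using finK by simp
      ultimately have "card ((D \<inter> W) \<union> (D \<inter> K)) = card (D \<inter> W) + card (D \<inter> K)"
        using fD by (simp add: card_Un_disjoint)
      then show ?thesis using s(2) by simp
    qed
    show ?thesis
    proof (intro conjI impI)
      show "card D \<le> k + card K" using cD c1 c2 by simp
      assume "card D = k + card K"
      then show "card (D \<inter> W) = k" using cD c1 c2 by simp
      have "card (D \<inter> K) = card K" using cD c1 c2 \<open>card D = k + card K\<close> by simp
      then show "D \<inter> K = K" using finK by (metis card_subset_eq inf_le2)
    qed
  qed
  obtain C0 where C0: "clique W F C0" "card C0 = k" using cn_facts(1)[OF g] kdef by auto
  have fC0: "finite C0" using C0 finW by (meson clique_def finite_subset)
  have cardU: "card (C \<union> K) = card C + card K" if "clique W F C" for C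
  proof -
    have "finite C" using that finW by (meson clique_def finite_subset)
    moreover have "C \<inter> K = {}" using that disj by (auto simp: clique_def)
    ultimately show ?thesis using finK card_Un_disjoint by blast
  qed
  show "clique_number (W \<union> K) F' = k + card K"
  proof -
    obtain D where D: "clique (W \<union> K) F' D" "card D = clique_number (W \<union> K) F'"
      using cn_facts(1)[OF g'] by auto
    have "card (C0 \<union> K) \<le> clique_number (W \<union> K) F'" using cn_facts(2)[OF g' clK[OF C0(1)]] .
    moreover have "card (C0 \<union> K) = k + card K" using cardU[OF C0(1)] C0(2) by simp
    moreover have "card D \<le> k + card K" using cardsplit[OF D(1)] by simp
    ultimately show ?thesis using D(2) by simp
  qed
  let ?f = "\<lambda>C. C \<union> K"
  have inj: "inj_on ?f (TJ_V W F k)"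
  proof
    fix C C' assume "C \<in> TJ_V W F k" "C' \<in> TJ_V W F k" "C \<union> K = C' \<union> K"
    then show "C = C'" using disj unfolding TJ_V_def cliques_of_size_def clique_def by blast
  qed
  have img: "?f ` TJ_V W F k = TJ_V (W \<union> K) F' (k + card K)"
  proof
    show "?f ` TJ_V W F k \<subseteq> TJ_V (W \<union> K) F' (k + card K)"
      using clK cardU finK unfolding TJ_V_def cliques_of_size_def by auto
    show "TJ_V (W \<union> K) F' (k + card K) \<subseteq> ?f ` TJ_V W F k"
    proof
      fix D assume "D \<in> TJ_V (W \<union> K) F' (k + card K)"
      hence D: "clique (W \<union> K) F' D" "card D = k + card K" unfolding TJ_V_def cliques_of_size_def by auto
      have s: "clique W F (D \<inter> W)" "D = (D \<inter> W) \<union> (D \<inter> K)" using split[OF D(1)] by auto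
      have c: "card (D \<inter> W) = k" "D \<inter> K = K" using cardsplit[OF D(1)] D(2) by auto
      have "D \<inter> W \<in> TJ_V W F k" using s c finW unfolding TJ_V_def cliques_of_size_def by auto
      moreover have "D = ?f (D \<inter> W)" using s c by auto
      ultimately show "D \<in> ?f ` TJ_V W F k" by blast
    qed
  qed
  have bij: "bij_betw ?f (TJ_V W F k) (TJ_V (W \<union> K) F' (k + card K))"
    using inj img by (simp add: bij_betw_def)
  have diff: "(C \<union> K) - (C' \<union> K) = C - C'" if "C \<in> TJ_V W F k" for C C'
    using that disj unfolding TJ_V_def cliques_of_size_def clique_def by blast
  have "\<forall>x\<in>TJ_V W F k. \<forall>y\<in>TJ_V W F k. TJ_E W F k x y \<longleftrightarrow> TJ_E (W \<union> K) F' (k + card K) (?f x) (?f y)"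
  proof (intro ballI)
    fix x y assume xy: "x \<in> TJ_V W F k" "y \<in> TJ_V W F k"
    have "?f x \<in> TJ_V (W \<union> K) F' (k + card K)" "?f y \<in> TJ_V (W \<union> K) F' (k + card K)"
      using xy img by auto
    then show "TJ_E W F k x y \<longleftrightarrow> TJ_E (W \<union> K) F' (k + card K) (?f x) (?f y)"
      using xy diff[OF xy(1), of y] diff[OF xy(2), of x] unfolding TJ_E_def TJ_V_def by simp
  qed
  then show "graph_iso (TJ_V W F k) (TJ_E W F k) (TJ_V (W \<union> K) F' (k + card K)) (TJ_E (W \<union> K) F' (k + card K))"
    using bij unfolding graph_iso_def by blast
qed

theorem proposition4p12:
  fixes V :: "'a set" and E :: "'a \<Rightarrow> 'a \<Rightarrow> bool" and k n :: nat
  assumes "graph V E"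
    and "max_TJ_graph k V E"
    and "k \<le> n"
  shows "max_TJ_graph n V E"
proof -
  obtain W :: "nat set" and F where WF: "graph W F" "clique_number W F = k"
    "graph_iso V E (TJ_V W F k) (TJ_E W F k)"
    using assms(2) unfolding max_TJ_graph_def by blast
  have "finite W" using WF(1) by (simp add: graph_def)
  then obtain N where N: "\<forall>x\<in>W. x < N" using finite_nat_set_iff_bounded by auto
  define K where "K = {N..<N + (n - k)}"
  have disj: "W \<inter> K = {}" using N unfolding K_def by auto
  have cK: "card K = n - k" "finite K" unfolding K_def by auto
  define F' where "F' \<equiv> (\<lambda>x y. F x y \<or> (x \<noteq> y \<and> x \<in> W \<union> K \<and> y \<in> W \<union> K \<and> (x \<in> K \<or> y \<in> K)))"
  note J = join_lemma[OF WF(1) disj cK(2) WF(2)[symmetric], folded F'_def]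
  have nk: "k + card K = n" using cK assms(3) by simp
  have "graph (W \<union> K) F'" "clique_number (W \<union> K) F' = n"
    "graph_iso V E (TJ_V (W \<union> K) F' n) (TJ_E (W \<union> K) F' n)"
    using J(1) J(2) iso_trans[OF WF(3) J(3)] nk by simp_all
  then show ?thesis unfolding max_TJ_graph_def by blast
qed

end
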